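(* Let $s>1$, $n \geq 2$ and $k \geq 1$ be given ($s$ real, $n,k$ integers). Then $$H_k(n) \leq \frac{\left(\zeta(s)-1\right)^{k-1} n^s}{2^s}.$$ Moreover, if $n$ is odd, then $$H_k(n) \leq \frac{\left(\left(1-2^{-s}\right)\zeta(s)-1\right)^{k-1} n^s}{3^s}.$$
   Context: $H_k(n)$ is the number of ordered $k$-tuples $(d_1,\dots,d_k)$ of integers $d_i\ge 2$ with $d_1\cdots d_k=n$. $\zeta$ is the Riemann zeta function. *)

theory Defs
  imports "HOL-Analysis.Analysis"
begin

definition H :: "nat \<Rightarrow> nat \<Rightarrow> nat" where
  "H k n = card {ds :: nat list. length ds = k \<and> (\<forall>d\<in>set ds. d \<ge> 2) \<and> prod_list ds = n}"

definition zeta :: "real \<Rightarrow> real" where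
  "zeta s = (\<Sum>m. 1 / (real (Suc m)) powr s)"

end

theory Submission
  imports Defs
begin

definition HS :: "nat \<Rightarrow> nat \<Rightarrow> nat list set" where
  "HS k n = {ds :: nat list. length ds = k \<and> (\<forall>d\<in>set ds. d \<ge> 2) \<and> prod_list ds = n}"

lemma H_HS: "H k n = card (HS k n)"
  by (simp add: H_def HS_def)

lemma HS_finite:
  assumes "n \<ge> 1" shows "finite (HS k n)"
proof (rule finite_subset)
  show "HS k n \<subseteq> {xs. set xs \<subseteq> {..n} \<and> length xs = k}"
  proof
    fix ds assume "ds \<in> HS k n"
    then have "length ds = k" "prod_list ds = n" by (auto simp: HS_def)
    moreover have "set ds \<subseteq> {..n}"
    proof
      fix x assume "x \<in> set ds"
      then have "x dvd n" using prod_list_dvd \<open>prod_list ds = n\<close> by metis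
      then show "x \<in> {..n}" using assms by (simp add: dvd_imp_le)
    qed
    ultimately show "ds \<in> {xs. set xs \<subseteq> {..n} \<and> length xs = k}" by auto
  qed
qed (rule finite_lists_length_eq, simp)

lemma HS_one: "k \<ge> 1 \<Longrightarrow> HS k 1 = {}"
proof (rule ccontr)
  assume "k \<ge> 1" "HS k 1 \<noteq> {}"
  then obtain ds :: "nat list" where "length ds = k" "\<forall>d\<in>set ds. d \<ge> 2" "prod_list ds = 1"
    by (auto simp: HS_def)
  then obtain x where "x \<in> set ds" using \<open>k \<ge> 1\<close> by (cases ds) auto
  then have "x dvd 1" using prod_list_dvd \<open>prod_list ds = 1\<close> by metis
  then show False using \<open>x \<in> set ds\<close> \<open>\<forall>d\<in>set ds. d \<ge> 2\<close> by fastforce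
qed

lemma H_1: "n \<ge> 2 \<Longrightarrow> H 1 n = 1"
proof -
  assume "n \<ge> 2"
  have "HS 1 n = {[n]}"
    using \<open>n \<ge> 2\<close> by (auto simp: HS_def length_Suc_conv)
  then show ?thesis by (simp add: H_HS)
qed

lemma HS_Suc_sub:
  assumes "n \<ge> 1"
  shows "HS (Suc k) n \<subseteq> (\<Union>d\<in>{d. d dvd n \<and> d \<ge> 2}. Cons d ` HS k (n div d))"
proof
  fix ds assume "ds \<in> HS (Suc k) n"
  then obtain d xs where ds: "ds = d # xs" "length xs = k" "d \<ge> 2" "\<forall>x\<in>set xs. x \<ge> 2"
     "d * prod_list xs = n"
    by (auto simp: HS_def length_Suc_conv)
  then have "d dvd n" by auto
  moreover have "prod_list xs = n div d" using ds by auto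
  ultimately show "ds \<in> (\<Union>d\<in>{d. d dvd n \<and> d \<ge> 2}. Cons d ` HS k (n div d))"
    using ds by (auto simp: HS_def)
qed

lemma H_Suc_le:
  assumes "n \<ge> 1"
  shows "H (Suc k) n \<le> (\<Sum>d\<in>{d. d dvd n \<and> d \<ge> 2}. H k (n div d))"
proof -
  have fin: "finite {d. d dvd n \<and> d \<ge> 2}" using assms by (auto intro: finite_subset[of _ "{..n}"] dvd_imp_le)
  have "H (Suc k) n \<le> card (\<Union>d\<in>{d. d dvd n \<and> d \<ge> 2}. Cons d ` HS k (n div d))"
    unfolding H_HS
  proof (rule card_mono[OF _ HS_Suc_sub[OF assms]])
    show "finite (\<Union>d\<in>{d. d dvd n \<and> d \<ge> 2}. Cons d ` HS k (n div d))"
    proof (rule finite_UN_I[OF fin])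
      fix d assume "d \<in> {d. d dvd n \<and> d \<ge> 2}"
      then have "n div d \<ge> 1" using assms
        by (metis (mono_tags, lifting) One_nat_def dvd_div_eq_0_iff less_one mem_Collect_eq not_le not_one_le_zero)
      then show "finite (Cons d ` HS k (n div d))" using HS_finite by blast
    qed
  qed
  also have "\<dots> \<le> (\<Sum>d\<in>{d. d dvd n \<and> d \<ge> 2}. card (Cons d ` HS k (n div d)))"
    by (rule card_UN_le[OF fin])
  also have "\<dots> = (\<Sum>d\<in>{d. d dvd n \<and> d \<ge> 2}. H k (n div d))"
    by (simp add: card_image H_HS)
  finally show ?thesis .
qed


lemma H_bound_gen:
  fixes s a c :: real and P :: "nat \<Rightarrow> bool"
  assumes s: "s > 0" and a: "a > 0"
  and Pdvd: "\<And>m d. P m \<Longrightarrow> d dvd m \<Longrightarrow> P d"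
  and Pa: "\<And>m. P m \<Longrightarrow> m \<ge> 2 \<Longrightarrow> real m \<ge> a"
  and c: "\<And>F. finite F \<Longrightarrow> (\<forall>d\<in>F. d \<ge> 2 \<and> P d) \<Longrightarrow> (\<Sum>d\<in>F. 1 / real d powr s) \<le> c"
  shows "k \<ge> 1 \<Longrightarrow> P m \<Longrightarrow> m \<ge> 1 \<Longrightarrow> real (H k m) \<le> c^(k-1) * real m powr s / a powr s"
proof (induction k arbitrary: m)
  case 0 then show ?case by simp
next
  case (Suc k)
  have c0: "c \<ge> 0" using c[of "{}"] by simp
  show ?case
  proof (cases "k = 0")
    case True
    show ?thesis
    proof (cases "m = 1")
      case True then show ?thesis using HS_one[of 1] by (simp add: H_HS \<open>k = 0\<close>)
    next
      case False
      then have "m \<ge> 2" using Suc.prems by simp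
      then have "real m \<ge> a" using Pa Suc.prems by blast
      then have "a powr s \<le> real m powr s" using a s by (intro powr_mono2) auto
      then show ?thesis using \<open>k = 0\<close> H_1[OF \<open>m \<ge> 2\<close>] a by simp
    qed
  next
    case False
    then have k1: "k \<ge> 1" by simp
    define D where "D = {d. d dvd m \<and> d \<ge> 2}"
    have finD: "finite D" using Suc.prems unfolding D_def
      by (auto intro: finite_subset[of _ "{..m}"] dvd_imp_le)
    have "real (H (Suc k) m) \<le> (\<Sum>d\<in>D. real (H k (m div d)))"
      using H_Suc_le[of m k] Suc.prems unfolding D_def by (metis of_nat_le_iff of_nat_sum)
    also have "\<dots> \<le> (\<Sum>d\<in>D. c^(k-1) * real m powr s / a powr s * (1 / real d powr s))"
    proof (rule sum_mono)
      fix d assume "d \<in> D"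
      then have dm: "d dvd m" "d \<ge> 2" by (auto simp: D_def)
      then have "m div d \<ge> 1" using Suc.prems
        by (metis One_nat_def dvd_div_eq_0_iff less_one not_le not_one_le_zero)
      moreover have "P (m div d)" using Pdvd[OF Suc.prems(2)] dm by (metis dvd_div_mult_self dvd_triv_left)
      ultimately have "real (H k (m div d)) \<le> c^(k-1) * real (m div d) powr s / a powr s"
        using Suc.IH k1 by blast
      also have "real (m div d) = real m / real d" using dm by (simp add: real_of_nat_div)
      also have "c^(k-1) * (real m / real d) powr s / a powr s = c^(k-1) * real m powr s / a powr s * (1 / real d powr s)"
        by (simp add: powr_divide)
      finally show "real (H k (m div d)) \<le> c^(k-1) * real m powr s / a powr s * (1 / real d powr s)" .
    qed
    also have "\<dots> = c^(k-1) * real m powr s / a powr s * (\<Sum>d\<in>D. 1 / real d powr s)"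
      by (simp add: sum_distrib_left)
    also have "\<dots> \<le> c^(k-1) * real m powr s / a powr s * c"
    proof (rule mult_left_mono)
      show "(\<Sum>d\<in>D. 1 / real d powr s) \<le> c"
        using c[OF finD] Pdvd[OF Suc.prems(2)] by (auto simp: D_def)
      show "0 \<le> c^(k-1) * real m powr s / a powr s" using c0 by simp
    qed
    also have "\<dots> = c^(Suc k - 1) * real m powr s / a powr s"
      using k1 by (cases k) auto
    finally show ?thesis .
  qed
qed


lemma zeta_sums:
  assumes "s > 1"
  shows "(\<lambda>m. 1 / real (Suc m) powr s) sums zeta s"
proof -
  have "summable (\<lambda>n. real n powr (-s))" using assms by (subst summable_real_powr_iff) auto
  then have "summable (\<lambda>n. real (Suc n) powr (-s))" by (subst summable_Suc_iff)
  then have "summable (\<lambda>m. 1 / real (Suc m) powr s)" by (simp add: powr_minus_divide)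
  then show ?thesis unfolding zeta_def by (rule summable_sums)
qed

lemma zeta_bound1:
  assumes s: "s > 1" and F: "finite F" "\<forall>d\<in>F. (d::nat) \<ge> 2"
  shows "(\<Sum>d\<in>F. 1 / real d powr s) \<le> zeta s - 1"
proof -
  define f where "f = (\<lambda>m. 1 / real (Suc m) powr s)"
  have sm: "f sums zeta s" using zeta_sums[OF s] by (simp add: f_def)
  define G where "G = (\<lambda>d. d - 1) ` F"
  have inj: "inj_on (\<lambda>d. d - 1) F" using F(2) by (auto simp: inj_on_def)
  have "(\<Sum>d\<in>F. 1 / real d powr s) = (\<Sum>m\<in>G. f m)"
    unfolding G_def using inj F(2) by (subst sum.reindex) (auto simp: f_def intro!: sum.cong)
  moreover have "0 \<notin> G" using F(2) by (auto simp: G_def)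
  moreover have "finite G" using F by (simp add: G_def)
  ultimately have "1 + (\<Sum>d\<in>F. 1 / real d powr s) = (\<Sum>m\<in>insert 0 G. f m)"
    by (simp add: f_def)
  also have "\<dots> \<le> suminf f"
    using sm \<open>finite G\<close> by (intro sum_le_suminf) (auto simp: sums_iff f_def)
  also have "\<dots> = zeta s" using sm by (simp add: sums_iff)
  finally show ?thesis by simp
qed

lemma zeta_bound2:
  assumes s: "s > 1" and F: "finite F" "\<forall>d\<in>F. (d::nat) \<ge> 2 \<and> odd d"
  shows "(\<Sum>d\<in>F. 1 / real d powr s) \<le> (1 - 2 powr (-s)) * zeta s - 1"
proof -
  define f where "f = (\<lambda>m. 1 / real (Suc m) powr s)"
  have sm: "f sums zeta s" using zeta_sums[OF s] by (simp add: f_def)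
  define e where "e = (\<lambda>m. if odd m then f m else 0)"
  have "(\<lambda>j. e (2*j+1)) = (\<lambda>j. 2 powr (-s) * f j)"
  proof
    fix j
    have 1: "real (Suc (2*j+1)) = 2 * real (Suc j)" by simp
    have 2: "(2 * real (Suc j)) powr s = 2 powr s * real (Suc j) powr s"
      by (rule powr_mult)
    have "e (2*j+1) = 1 / real (Suc (2*j+1)) powr s" by (simp add: e_def f_def)
    also have "\<dots> = 1 / (2 powr s * real (Suc j) powr s)" by (simp only: 1 2)
    also have "\<dots> = 2 powr (-s) * f j" by (simp add: f_def powr_minus_divide)
    finally show "e (2*j+1) = 2 powr (-s) * f j" .
  qed
  moreover have "(\<lambda>j. 2 powr (-s) * f j) sums (2 powr (-s) * zeta s)"
    using sm by (rule sums_mult)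
  ultimately have "(\<lambda>j. e (2*j+1)) sums (2 powr (-s) * zeta s)" by simp
  moreover have "strict_mono (\<lambda>j::nat. 2*j+1)" by (auto simp: strict_mono_def)
  moreover have "e n = 0" if nr: "n \<notin> range (\<lambda>j::nat. 2*j+1)" for n
  proof (cases "odd n")
    case True
    then have "n = 2 * (n div 2) + 1" by simp
    then have "n \<in> range (\<lambda>j::nat. 2*j+1)" by (metis rangeI)
    then show ?thesis using nr by blast
  qed (simp add: e_def)
  ultimately have se: "e sums (2 powr (-s) * zeta s)"
    using sums_mono_reindex[of "\<lambda>j. 2*j+1" e] by blast
  define h where "h = (\<lambda>m. f m - e m)"
  have sh: "h sums (zeta s - 2 powr (-s) * zeta s)" unfolding h_def using sm se by (rule sums_diff)
  define G where "G = (\<lambda>d. d - 1) ` F"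
  have inj: "inj_on (\<lambda>d. d - 1) F" using F(2) by (auto simp: inj_on_def)
  have "(\<Sum>d\<in>F. 1 / real d powr s) = (\<Sum>m\<in>G. h m)"
    unfolding G_def using inj F(2)
    by (subst sum.reindex) (auto simp: h_def e_def f_def intro!: sum.cong)
  moreover have "0 \<notin> G" using F(2) by (auto simp: G_def)
  moreover have "finite G" using F by (simp add: G_def)
  ultimately have "1 + (\<Sum>d\<in>F. 1 / real d powr s) = (\<Sum>m\<in>insert 0 G. h m)"
    by (simp add: h_def e_def f_def)
  also have "\<dots> \<le> suminf h"
    using sh \<open>finite G\<close> by (intro sum_le_suminf) (auto simp: sums_iff h_def e_def f_def)
  also have "\<dots> = (1 - 2 powr (-s)) * zeta s" using sh by (simp add: sums_iff algebra_simps)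
  finally show ?thesis by simp
qed

theorem corollary2p5:
  fixes s :: real and n k :: nat
  assumes "s > 1" and "n \<ge> 2" and "k \<ge> 1"
  shows "real (H k n) \<le> (zeta s - 1) ^ (k - 1) * real n powr s / 2 powr s
     \<and> (odd n \<longrightarrow>
         real (H k n) \<le> ((1 - 2 powr (-s)) * zeta s - 1) ^ (k - 1) * real n powr s / 3 powr s)"
proof
  show "real (H k n) \<le> (zeta s - 1) ^ (k - 1) * real n powr s / 2 powr s"
    using H_bound_gen[of s 2 "\<lambda>_. True" "zeta s - 1" k n] assms zeta_bound1[of s] by auto
  show "odd n \<longrightarrow>
         real (H k n) \<le> ((1 - 2 powr (-s)) * zeta s - 1) ^ (k - 1) * real n powr s / 3 powr s"
  proof
    assume "odd n"
    have Pa: "real m \<ge> 3" if "odd m" "m \<ge> 2" for m :: nat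
    proof -
      have "m \<noteq> 2" using that by auto
      then have "m \<ge> 3" using that by simp
      then show ?thesis by simp
    qed
    have odd_dvd: "odd d" if "odd m" "d dvd m" for m d :: nat
      using that by (meson dvd_trans)
    show "real (H k n) \<le> ((1 - 2 powr (-s)) * zeta s - 1) ^ (k - 1) * real n powr s / 3 powr s"
    proof (rule H_bound_gen[of s 3 odd])
      show "0 < s" using assms by simp
      show "(0::real) < 3" by simp
      show "\<And>m d::nat. odd m \<Longrightarrow> d dvd m \<Longrightarrow> odd d" using odd_dvd by blast
      show "\<And>m::nat. odd m \<Longrightarrow> 2 \<le> m \<Longrightarrow> 3 \<le> real m" using Pa by blast
      show "\<And>F. finite F \<Longrightarrow> \<forall>d\<in>F. (2::nat) \<le> d \<and> odd d \<Longrightarrow>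
        (\<Sum>d\<in>F. 1 / real d powr s) \<le> (1 - 2 powr - s) * zeta s - 1"
        using zeta_bound2[OF assms(1)] by blast
    qed (use assms \<open>odd n\<close> in auto)
  qed
qed

end
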